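(* Let $f:\mathbb{R}^n\to\mathbb{R}$, $g:\mathbb{R}^m\to\mathbb{R}$, $Q:\mathbb{R}^n\times\mathbb{R}^m\to\mathbb{R}\cup\{+\infty\}$ and $L(x,y)=f(x)+Q(x,y)+g(y)$ satisfy: (A1) $L$ is bounded below; $f,g$ are continuously differentiable with $\nabla f$, $\nabla g$ Lipschitz continuous with constants $L_{\nabla f}$, $L_{\nabla g}$; $Q$ is proper and lower semicontinuous; $\phi_1:\mathbb{R}^n\to\mathbb{R}$, $\phi_2:\mathbb{R}^m\to\mathbb{R}$ are differentiable, $\phi_i$ is $\theta_i$-strongly convex with $\theta_1>L_{\nabla f}$, $\theta_2>L_{\nabla g}$, and $\nabla\phi_i$ is $\eta_i$-Lipschitz continuous ($i=1,2$); (A2) $L$ is coercive and $\mathrm{dom}\,Q$ is closed; for all $(x,y)\in\mathrm{dom}\,Q$, $\partial_xQ(x,y)\times\partial_yQ(x,y)\subset\partial Q(x,y)$; and $Q(x,y)=q(x,y)+h(x)$, where $h:\mathbb{R}^n\to\mathbb{R}\cup\{+\infty\}$ is continuous on its domain, $q$ is continuous on $\mathrm{dom}\,Q$, for every $y$ the partial function $q(\cdot,y)$ is continuously differentiable, and for each bounded subset $D_1\times D_2\subset\mathrm{dom}\,Q$ there exists $\xi>0$ such that $\|\nabla_xq(\bar x,y)-\nabla_xq(\bar x,\bar y)\|\le\xi\|y-\bar y\|$ for all $\bar x\in D_1$, $y,\bar y\in D_2$. Let $z_k=(x_k,y_k)$, together with $(\hat x_k,\hat y_k)$, be generated by the following algorithm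 with initial point $z_0=(x_0,y_0)$: set $(\hat x_0,\hat y_0)=(x_0,y_0)$, choose $\alpha_{\max},\beta_{\max}\ge0$ with $\alpha_{\max}+\beta_{\max}<1$ and $\alpha_k\in[0,\alpha_{\max}]$, $\beta_k\in[0,\beta_{\max}]$; for $k=0,1,\dots$: 1. $x_{k+1}\in\arg\min_{x}\{Q(x,\hat y_k)+\langle\nabla f(\hat x_k),x\rangle+D_{\phi_1}(x,\hat x_k)\}$, $y_{k+1}\in\arg\min_{y}\{Q(x_{k+1},y)+\langle\nabla g(\hat y_k),y\rangle+D_{\phi_2}(y,\hat y_k)\}$; 2. $u_{k+1}=x_{k+1}+\alpha_k(x_{k+1}-x_k)+\beta_k(x_k-x_{k-1})$, $v_{k+1}=y_{k+1}+\alpha_k(y_{k+1}-y_k)+\beta_k(y_k-y_{k-1})$; 3. if $L(u_{k+1},v_{k+1})\le L(x_{k+1},y_{k+1})$ then $(\hat x_{k+1},\hat y_{k+1})=(u_{k+1},v_{k+1})$, else $(\hat x_{k+1},\hat y_{k+1})=(x_{k+1},y_{k+1})$. Let $\mathcal{L}(z_0)$ be the set of cluster points of $\{z_k\}$, i.e. the set of $\hat z\in\mathbb{R}^n\times\mathbb{R}^m$ for which there is a strictly increasing sequence $\{k_j\}$ with $z_{k_j}\to\hat z$. Then: (i) $\mathcal{L}(z_0)$ is a nonempty compact set, and $L$ is finite and constant on $\mathcal{L}(z_0)$; (ii) $\mathcal{L}(z_0)\subset\mathrm{crit}\,L$; (iii) $\lim_{k\to\infty}\mathrm{dist}(z_k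,\mathcal{L}(z_0))=0$.
   Context: For a convex differentiable $\phi$, $D_\phi(x,y)=\phi(x)-\phi(y)-\langle\nabla\phi(y),x-y\rangle$ (Bregman distance). $\phi$ is $\theta$-strongly convex if $\phi-\frac\theta2\|\cdot\|^2$ is convex. For a proper lsc $F$, the Fréchet subdifferential $\hat\partial F(x)$ is the set of $v$ with $\liminf_{y\to x}\frac{F(y)-F(x)-\langle v,y-x\rangle}{\|y-x\|}\ge0$ (empty if $x\notin\mathrm{dom}F$), and the (limiting) subdifferential is $\partial F(x)=\{v:\exists x_k\to x, F(x_k)\to F(x), v_k\in\hat\partial F(x_k), v_k\to v\}$. $\partial_xQ$, $\partial_yQ$ are the limiting subdifferentials of the partial functions. $\mathrm{crit}\,L=\{z: 0\in\partial L(z)\}$ is the set of critical points. $(x_{-1},y_{-1})$ in step 2 is a given initial point (e.g. $(x_0,y_0)$). *)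

theory Defs
  imports "HOL-Analysis.Analysis"
begin

definition edom :: "('v \<Rightarrow> ereal) \<Rightarrow> 'v set" where
  "edom F = {x. F x < \<infinity>}"

definition proper_fun :: "('v \<Rightarrow> ereal) \<Rightarrow> bool" where
  "proper_fun F \<longleftrightarrow> (\<forall>x. F x \<noteq> -\<infinity>) \<and> (\<exists>x. F x < \<infinity>)"

definition lsc_fun :: "('v::topological_space \<Rightarrow> ereal) \<Rightarrow> bool" where
  "lsc_fun F \<longleftrightarrow> (\<forall>x. F x \<le> Liminf (at x) F)"

definition bregman :: "('v::real_inner \<Rightarrow> real) \<Rightarrow> ('v \<Rightarrow> 'v) \<Rightarrow> 'v \<Rightarrow> 'v \<Rightarrow> real" where
  "bregman phi dphi x y = phi x - phi y - inner (dphi y) (x - y)"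

definition strongly_convex :: "real \<Rightarrow> ('v::real_normed_vector \<Rightarrow> real) \<Rightarrow> bool" where
  "strongly_convex theta phi \<longleftrightarrow> convex_on UNIV (\<lambda>x. phi x - theta / 2 * (norm x)\<^sup>2)"

text \<open>Frechet subdifferential: v such that
  liminf_{y -> x} (F y - F x - <v, y - x>) / norm (y - x) >= 0 (written out with epsilon-delta),
  empty outside the domain.\<close>
definition frechet_subdiff :: "('v::real_inner \<Rightarrow> ereal) \<Rightarrow> 'v \<Rightarrow> 'v set" where
  "frechet_subdiff F x =
     (if F x \<in> {-\<infinity>, \<infinity>} then {} else
      {v. \<forall>e>0. \<exists>d>0. \<forall>y. 0 < norm (y - x) \<and> norm (y - x) < d \<longrightarrow>
            F y \<ge> F x + ereal (inner v (y - x) - e * norm (y - x))})"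

definition lim_subdiff :: "('v::real_inner \<Rightarrow> ereal) \<Rightarrow> 'v \<Rightarrow> 'v set" where
  "lim_subdiff F x =
     {v. \<exists>xs vs. xs \<longlonglongrightarrow> x \<and> (\<lambda>k. F (xs k)) \<longlonglongrightarrow> F x \<and>
            (\<forall>k. vs k \<in> frechet_subdiff F (xs k)) \<and> vs \<longlonglongrightarrow> v}"

definition crit :: "('v::real_inner \<Rightarrow> ereal) \<Rightarrow> 'v set" where
  "crit F = {z. 0 \<in> lim_subdiff F z}"

definition cluster_points :: "(nat \<Rightarrow> 'v::topological_space) \<Rightarrow> 'v set" where
  "cluster_points z = {zh. \<exists>r. strict_mono r \<and> (z \<circ> r) \<longlonglongrightarrow> zh}"

end

theory Submission
  imports Defs
begin

lemma descent_lemma: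
  fixes f :: "'a::real_inner \<Rightarrow> real"
  assumes fd: "\<And>u. (f has_derivative (\<lambda>d. inner (df u) d)) (at u)"
    and lip: "lipschitz_on C UNIV df"
  shows "f a \<le> f b + inner (df b) (a - b) + C / 2 * (norm (a - b))\<^sup>2"
proof -
  define d where "d = a - b"
  define \<psi> where "\<psi> t = f (b + t *\<^sub>R d) - t * inner (df b) d - C / 2 * t\<^sup>2 * (norm d)\<^sup>2" for t
  define \<psi>' where "\<psi>' t = inner (df (b + t *\<^sub>R d)) d - inner (df b) d - C * t * (norm d)\<^sup>2" for t
  have der: "DERIV \<psi> t :> \<psi>' t" for t
  proof -
    have "((\<lambda>t. b + t *\<^sub>R d) has_derivative (\<lambda>s. s *\<^sub>R d)) (at t)"
      by (auto intro!: derivative_eq_intros)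
    from has_derivative_compose[OF this fd]
    have "((\<lambda>t. f (b + t *\<^sub>R d)) has_derivative (\<lambda>s. inner (df (b + t *\<^sub>R d)) (s *\<^sub>R d))) (at t)" .
    then have "((\<lambda>t. f (b + t *\<^sub>R d)) has_derivative (\<lambda>s. s * inner (df (b + t *\<^sub>R d)) d)) (at t)"
      by simp
    moreover have "(\<lambda>s. s * inner (df (b + t *\<^sub>R d)) d) = (*) (inner (df (b + t *\<^sub>R d)) d)"
      by (auto simp: fun_eq_iff)
    ultimately have 1: "DERIV (\<lambda>t. f (b + t *\<^sub>R d)) t :> inner (df (b + t *\<^sub>R d)) d"
      by (simp add: has_field_derivative_def)
    show ?thesis unfolding \<psi>_def \<psi>'_def
      by (auto intro!: derivative_eq_intros 1)
  qed
  obtain z where z: "0 < z" "z < 1" "\<psi> 1 - \<psi> 0 = (1 - 0) * \<psi>' z"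
    using MVT2[of 0 1 \<psi> \<psi>'] der by auto
  have C0: "C \<ge> 0" using lip by (simp add: lipschitz_on_def)
  have "inner (df (b + z *\<^sub>R d)) d - inner (df b) d = inner (df (b + z *\<^sub>R d) - df b) d"
    by (simp add: inner_diff_left)
  also have "\<dots> \<le> norm (df (b + z *\<^sub>R d) - df b) * norm d"
    by (rule norm_cauchy_schwarz)
  also have "\<dots> \<le> (C * norm (z *\<^sub>R d)) * norm d"
    using lipschitz_on_normD[OF lip, of "b + z *\<^sub>R d" b] by (simp add: mult_right_mono)
  also have "\<dots> = C * z * (norm d)\<^sup>2" using z by (simp add: power2_eq_square)
  finally have "\<psi>' z \<le> 0" unfolding \<psi>'_def by simp
  with z have "\<psi> 1 \<le> \<psi> 0" by simp
  then show ?thesis unfolding \<psi>_def d_def by simp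
qed

lemma sc_bregman:
  fixes phi :: "'a::real_inner \<Rightarrow> real"
  assumes sc: "strongly_convex theta phi"
    and pd: "\<And>u. (phi has_derivative (\<lambda>d. inner (dphi u) d)) (at u)"
  shows "bregman phi dphi a b \<ge> theta / 2 * (norm (a - b))\<^sup>2"
proof -
  define d where "d = a - b"
  define \<gamma> where "\<gamma> t = phi (b + t *\<^sub>R d) - theta / 2 * (norm (b + t *\<^sub>R d))\<^sup>2" for t
  have cvx: "convex_on UNIV (\<lambda>x. phi x - theta / 2 * (norm x)\<^sup>2)"
    using sc by (simp add: strongly_convex_def)
  have cg: "convex_on UNIV \<gamma>"
  proof (rule convex_onI)
    fix t x y :: real assume t: "0 < t" "t < 1"
    have e: "b + ((1 - t) * x + t * y) *\<^sub>R d = (1 - t) *\<^sub>R (b + x *\<^sub>R d) + t *\<^sub>R (b + y *\<^sub>R d)"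
      by (simp add: algebra_simps)
    show "\<gamma> ((1 - t) *\<^sub>R x + t *\<^sub>R y) \<le> (1 - t) * \<gamma> x + t * \<gamma> y"
      unfolding \<gamma>_def using convex_onD[OF cvx, of t "b + x *\<^sub>R d" "b + y *\<^sub>R d"] t e
      by (simp add: algebra_simps)
  qed simp
  have nexp: "(norm (b + t *\<^sub>R d))\<^sup>2 = (norm b)\<^sup>2 + 2 * t * inner b d + t\<^sup>2 * (norm d)\<^sup>2" for t
    unfolding power2_norm_eq_inner by (simp add: inner_add_left inner_add_right inner_commute algebra_simps power2_eq_square)
  have der: "DERIV \<gamma> 0 :> inner (dphi b) d - theta * inner b d"
  proof -
    have "((\<lambda>t. b + t *\<^sub>R d) has_derivative (\<lambda>s. s *\<^sub>R d)) (at 0)"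
      by (auto intro!: derivative_eq_intros)
    from has_derivative_compose[OF this pd]
    have "((\<lambda>t. phi (b + t *\<^sub>R d)) has_derivative (\<lambda>s. inner (dphi (b + 0 *\<^sub>R d)) (s *\<^sub>R d))) (at 0)" .
    then have "((\<lambda>t. phi (b + t *\<^sub>R d)) has_derivative (\<lambda>s. s * inner (dphi b) d)) (at 0)"
      by simp
    moreover have "(\<lambda>s. s * inner (dphi b) d) = (*) (inner (dphi b) d)"
      by (auto simp: fun_eq_iff)
    ultimately have 1: "DERIV (\<lambda>t. phi (b + t *\<^sub>R d)) 0 :> inner (dphi b) d"
      by (simp add: has_field_derivative_def)
    have g: "\<gamma> = (\<lambda>t. phi (b + t *\<^sub>R d) - theta / 2 * ((norm b)\<^sup>2 + 2 * t * inner b d + t\<^sup>2 * (norm d)\<^sup>2))"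
      unfolding \<gamma>_def nexp ..
    show ?thesis unfolding g
      by (auto intro!: derivative_eq_intros 1)
  qed
  have "\<gamma> 1 - \<gamma> 0 \<ge> (inner (dphi b) d - theta * inner b d) * (1 - 0)"
    by (rule convex_on_imp_above_tangent[OF cg]) (auto simp: der)
  moreover have "b + d = a" by (simp add: d_def)
  ultimately show ?thesis
    unfolding \<gamma>_def bregman_def d_def[symmetric] using nexp[of 1]
    by (simp add: d_def[symmetric] algebra_simps power2_norm_eq_inner inner_diff_left inner_diff_right) (simp add: field_simps)
qed

lemma frechet_of_min:
  fixes F :: "'v::real_inner \<Rightarrow> ereal"
  assumes pd: "\<And>u. (phi has_derivative (\<lambda>d. inner (dphi u) d)) (at u)"
    and fin: "\<bar>F p\<bar> \<noteq> \<infinity>"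
    and nm: "\<And>u. F u \<noteq> -\<infinity>"
    and mn: "\<And>u. F u \<noteq> \<infinity> \<Longrightarrow>
       real_of_ereal (F p) + inner c p \<le> real_of_ereal (F u) + inner c u + bregman phi dphi u p"
  shows "-c \<in> frechet_subdiff F p"
proof -
  have "\<exists>d>0. \<forall>y. 0 < norm (y - p) \<and> norm (y - p) < d \<longrightarrow>
            F y \<ge> F p + ereal (inner (-c) (y - p) - e * norm (y - p))" if e: "e > 0" for e
  proof -
    from pd[of p, unfolded has_derivative_within_alt] e obtain d where d: "d > 0"
      "\<And>y. norm (y - p) < d \<Longrightarrow> norm (phi y - phi p - inner (dphi p) (y - p)) \<le> e * norm (y - p)"
      by blast
    show ?thesis
    proof (intro exI[of _ d] conjI allI impI)
      fix y assume y: "0 < norm (y - p) \<and> norm (y - p) < d"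
      show "F y \<ge> F p + ereal (inner (-c) (y - p) - e * norm (y - p))"
      proof (cases "F y = \<infinity>")
        case True then show ?thesis by simp
      next
        case False
        then obtain r where r: "F y = ereal r" using nm[of y] by (cases "F y") auto
        obtain s where s: "F p = ereal s" using fin by (cases "F p") auto
        have b: "bregman phi dphi y p \<le> e * norm (y - p)"
          using d(2)[of y] y unfolding bregman_def by simp
        have "s + inner c p \<le> r + inner c y + bregman phi dphi y p"
          using mn[of y] False r s by simp
        with b have "s + (inner (-c) (y - p) - e * norm (y - p)) \<le> r"
          by (simp add: inner_diff_right)
        then show ?thesis using r s by simp
      qed
    qed (use d in auto)
  qed
  then show ?thesis using fin unfolding frechet_subdiff_def by auto
qed

lemma frechet_sum:
  fixes Q G :: "'v::real_inner \<Rightarrow> ereal"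
  assumes Fd: "(F has_derivative (\<lambda>d. inner (dF p) d)) (at p)"
    and G: "\<And>z. G z = Q z + ereal (F z)"
    and w: "w \<in> frechet_subdiff Q p"
  shows "w + dF p \<in> frechet_subdiff G p"
proof -
  have fin: "\<bar>Q p\<bar> \<noteq> \<infinity>" using w unfolding frechet_subdiff_def by (auto split: if_splits)
  then obtain s where s: "Q p = ereal s" by (cases "Q p") auto
  have wD: "\<forall>e>0. \<exists>d>0. \<forall>y. 0 < norm (y - p) \<and> norm (y - p) < d \<longrightarrow>
            Q y \<ge> Q p + ereal (inner w (y - p) - e * norm (y - p))"
    using w fin unfolding frechet_subdiff_def by (auto split: if_splits)
  have "\<exists>d>0. \<forall>y. 0 < norm (y - p) \<and> norm (y - p) < d \<longrightarrow>
            G y \<ge> G p + ereal (inner (w + dF p) (y - p) - e * norm (y - p))" if e: "e > 0" for e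
  proof -
    from Fd[unfolded has_derivative_within_alt] e obtain d1 where d1: "d1 > 0"
      "\<And>y. norm (y - p) < d1 \<Longrightarrow> norm (F y - F p - inner (dF p) (y - p)) \<le> e / 2 * norm (y - p)"
      by (metis half_gt_zero UNIV_I)
    from wD e obtain d2 where d2: "d2 > 0" "\<And>y. 0 < norm (y - p) \<and> norm (y - p) < d2 \<Longrightarrow>
            Q y \<ge> Q p + ereal (inner w (y - p) - e / 2 * norm (y - p))"
      by (metis half_gt_zero)
    show ?thesis
    proof (intro exI[of _ "min d1 d2"] conjI allI impI)
      fix y assume y: "0 < norm (y - p) \<and> norm (y - p) < min d1 d2"
      have q: "Q y \<ge> ereal (s + inner w (y - p) - e / 2 * norm (y - p))"
        using d2(2)[of y] y s by (simp add: algebra_simps)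
      have "\<bar>F y - F p - inner (dF p) (y - p)\<bar> \<le> e / 2 * norm (y - p)"
        using d1(2)[of y] y by simp
      from abs_le_D2[OF this]
      have fl: "F y \<ge> F p + inner (dF p) (y - p) - e / 2 * norm (y - p)" by linarith
      have "G p + ereal (inner (w + dF p) (y - p) - e * norm (y - p))
          = ereal (s + inner w (y - p) - e / 2 * norm (y - p)) + ereal (F p + inner (dF p) (y - p) - e / 2 * norm (y - p))"
        using G s by (simp add: inner_add_left algebra_simps)
      also have "\<dots> \<le> Q y + ereal (F y)"
        using q fl by (intro add_mono) auto
      finally show "G y \<ge> G p + ereal (inner (w + dF p) (y - p) - e * norm (y - p))"
        using G by simp
    qed (use d1 d2 in auto)
  qed
  moreover have "\<bar>G p\<bar> \<noteq> \<infinity>" using G s by simp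
  ultimately show ?thesis unfolding frechet_subdiff_def by auto
qed

lemma lim_sum:
  fixes Q G :: "'v::real_inner \<Rightarrow> ereal"
  assumes Fd: "\<And>z. (F has_derivative (\<lambda>d. inner (dF z) d)) (at z)"
    and dFc: "continuous_on UNIV dF"
    and G: "\<And>z. G z = Q z + ereal (F z)"
    and fin: "\<bar>Q p\<bar> \<noteq> \<infinity>"
    and v: "v \<in> lim_subdiff Q p"
  shows "v + dF p \<in> lim_subdiff G p"
proof -
  obtain xs vs where xs: "xs \<longlonglongrightarrow> p" "(\<lambda>k. Q (xs k)) \<longlonglongrightarrow> Q p"
    "\<And>k. vs k \<in> frechet_subdiff Q (xs k)" "vs \<longlonglongrightarrow> v"
    using v unfolding lim_subdiff_def by blast
  have Fc: "continuous_on UNIV F"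
    using Fd by (meson continuous_on_eq_continuous_within has_derivative_continuous)
  have "(\<lambda>k. F (xs k)) \<longlonglongrightarrow> F p"
    using continuous_on_tendsto_compose[OF Fc xs(1)] by simp
  then have "(\<lambda>k. ereal (F (xs k))) \<longlonglongrightarrow> ereal (F p)" by simp
  from tendsto_add_ereal[OF fin _ xs(2) this]
  have "(\<lambda>k. G (xs k)) \<longlonglongrightarrow> G p" using G by simp
  moreover have "(\<lambda>k. dF (xs k)) \<longlonglongrightarrow> dF p"
    using continuous_on_tendsto_compose[OF dFc xs(1)] by simp
  then have "(\<lambda>k. vs k + dF (xs k)) \<longlonglongrightarrow> v + dF p"
    using xs(4) by (intro tendsto_add) auto
  moreover have "vs k + dF (xs k) \<in> frechet_subdiff G (xs k)" for k
    by (rule frechet_sum) (rule Fd, rule G, rule xs(3))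
  ultimately show ?thesis unfolding lim_subdiff_def using xs(1)
    by (intro CollectI exI[of _ xs] exI[of _ "\<lambda>k. vs k + dF (xs k)"]) auto
qed

lemma frechet_in_lim:
  assumes "v \<in> frechet_subdiff F p" shows "v \<in> lim_subdiff F p"
  unfolding lim_subdiff_def using assms
  by (intro CollectI exI[of _ "\<lambda>k. p"] exI[of _ "\<lambda>k. v"]) auto

lemma cluster_char:
  fixes z :: "nat \<Rightarrow> 'v::metric_space"
  shows "zh \<in> cluster_points z \<longleftrightarrow> (\<forall>e>0. \<forall>N. \<exists>k\<ge>N. dist (z k) zh < e)"
proof
  assume "zh \<in> cluster_points z"
  then obtain r where r: "strict_mono r" "(z \<circ> r) \<longlonglongrightarrow> zh"
    unfolding cluster_points_def by blast
  show "\<forall>e>0. \<forall>N. \<exists>k\<ge>N. dist (z k) zh < e"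
  proof (intro allI impI)
    fix e :: real and N assume e: "e > 0"
    from r(2)[unfolded lim_sequentially] e obtain M where M: "\<And>n. n \<ge> M \<Longrightarrow> dist ((z \<circ> r) n) zh < e"
      by blast
    have "r (max M N) \<ge> N" using seq_suble[OF r(1), of "max M N"] by simp
    then show "\<exists>k\<ge>N. dist (z k) zh < e" using M[of "max M N"] by auto
  qed
next
  assume H: "\<forall>e>0. \<forall>N. \<exists>k\<ge>N. dist (z k) zh < e"
  define P where "P n k \<longleftrightarrow> dist (z k) zh < 1 / (real n + 1)" for n k
  have "\<exists>f. \<forall>n. P n (f n) \<and> f n < f (Suc n)"
  proof (rule dependent_nat_choice)
    have "(1::real) / (real 0 + 1) > 0" by simp
    with H obtain k where "dist (z k) zh < 1 / (real 0 + 1)" by blast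
    then show "\<exists>x. P 0 x" unfolding P_def by blast
    fix k n assume "P n k"
    have "(1::real) / (real (Suc n) + 1) > 0" by simp
    with H obtain k' where "k' \<ge> Suc k" "dist (z k') zh < 1 / (real (Suc n) + 1)" by blast
    then show "\<exists>k'. P (Suc n) k' \<and> k < k'" unfolding P_def by auto
  qed
  then obtain f where f: "\<And>n. P n (f n)" "\<And>n. f n < f (Suc n)" by blast
  have sm: "strict_mono f" using f(2) by (simp add: strict_mono_Suc_iff)
  have "(z \<circ> f) \<longlonglongrightarrow> zh"
    unfolding lim_sequentially
  proof (intro allI impI)
    fix e :: real assume e: "e > 0"
    obtain N where N: "inverse (real (Suc N)) < e" using reals_Archimedean[OF e] by blast
    have "dist ((z \<circ> f) n) zh < e" if "n \<ge> N" for n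
    proof -
      have "dist ((z \<circ> f) n) zh < 1 / (real n + 1)" using f(1)[of n] unfolding P_def by simp
      also have "\<dots> \<le> inverse (real (Suc N))" using that by (simp add: field_simps)
      finally show ?thesis using N by linarith
    qed
    then show "\<exists>N. \<forall>n\<ge>N. dist ((z \<circ> f) n) zh < e" by blast
  qed
  then show "zh \<in> cluster_points z" using sm unfolding cluster_points_def by blast
qed

lemma cluster_closed:
  fixes z :: "nat \<Rightarrow> 'v::metric_space"
  shows "closed (cluster_points z)"
  unfolding closed_sequential_limits
proof (intro allI impI, elim conjE)
  fix w l assume w: "\<forall>n. w n \<in> cluster_points z" and wl: "w \<longlonglongrightarrow> l"
  show "l \<in> cluster_points z"
    unfolding cluster_char
  proof (intro allI impI)
    fix e :: real and N assume e: "e > 0"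
    have "e / 2 > 0" using e by simp
    with wl[unfolded lim_sequentially] obtain M0 where "\<forall>n\<ge>M0. dist (w n) l < e / 2"
      by blast
    then have M: "dist (w M0) l < e / 2" by blast
    from w[rule_format, of M0, unfolded cluster_char] \<open>e / 2 > 0\<close> obtain k where k: "k \<ge> N" "dist (z k) (w M0) < e / 2"
      by blast
    have "dist (z k) l \<le> dist (z k) (w M0) + dist (w M0) l" by (rule dist_triangle)
    with k M show "\<exists>k\<ge>N. dist (z k) l < e" by (intro exI[of _ k]) auto
  qed
qed

lemma cluster_subset_closure:
  fixes z :: "nat \<Rightarrow> 'v::metric_space"
  shows "cluster_points z \<subseteq> closure (range z)"
proof
  fix zh assume "zh \<in> cluster_points z"
  then have "\<forall>e>0. \<exists>k. dist (z k) zh < e" unfolding cluster_char by blast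
  then show "zh \<in> closure (range z)" unfolding closure_approachable by auto
qed

lemma cluster_compact:
  fixes z :: "nat \<Rightarrow> 'v::heine_borel"
  assumes "bounded (range z)"
  shows "compact (cluster_points z)"
proof -
  have "bounded (cluster_points z)"
    using cluster_subset_closure bounded_closure[OF assms] by (rule bounded_subset[rotated])
  then show ?thesis using cluster_closed by (simp add: compact_eq_bounded_closed)
qed

lemma cluster_nonempty:
  fixes z :: "nat \<Rightarrow> 'v::heine_borel"
  assumes "bounded (range z)"
  shows "cluster_points z \<noteq> {}"
  using bounded_imp_convergent_subsequence[OF assms] unfolding cluster_points_def by blast

lemma cluster_sub:
  assumes "strict_mono r" "((z \<circ> r) \<circ> s) \<longlonglongrightarrow> l" "strict_mono s"
  shows "l \<in> cluster_points z"
proof -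
  have "(z \<circ> (r \<circ> s)) \<longlonglongrightarrow> l" using assms(2) by (simp add: comp_assoc)
  then show ?thesis using strict_mono_o[OF assms(1) assms(3)] unfolding cluster_points_def by blast
qed

lemma cluster_infdist:
  fixes z :: "nat \<Rightarrow> 'v::heine_borel"
  assumes bd: "bounded (range z)"
  shows "(\<lambda>k. infdist (z k) (cluster_points z)) \<longlonglongrightarrow> 0"
proof (rule ccontr)
  let ?C = "cluster_points z"
  assume "\<not> ?thesis"
  then obtain e :: real where e: "e > 0" and fr: "\<forall>N. \<exists>n\<ge>N. \<not> dist (infdist (z n) ?C) 0 < e"
    unfolding lim_sequentially by blast
  let ?S = "{n. infdist (z n) ?C \<ge> e}"
  have "infinite ?S"
    unfolding infinite_nat_iff_unbounded_le
  proof
    fix N from fr obtain n where "n \<ge> N" "\<not> dist (infdist (z n) ?C) 0 < e" by blast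
    then show "\<exists>n\<ge>N. n \<in> ?S" using infdist_nonneg[of "z n" ?C] by auto
  qed
  from infinite_enumerate[OF this] obtain r :: "nat \<Rightarrow> nat" where r: "strict_mono r" "\<forall>n. r n \<in> ?S" by blast
  have "bounded (range (z \<circ> r))" using bd by (rule bounded_subset) auto
  from bounded_imp_convergent_subsequence[OF this] obtain l s
    where s: "strict_mono s" "((z \<circ> r) \<circ> s) \<longlonglongrightarrow> l" by blast
  have l: "l \<in> ?C" by (rule cluster_sub[OF r(1) s(2) s(1)])
  from s(2)[unfolded lim_sequentially] e obtain M0 where "\<forall>n\<ge>M0. dist (((z \<circ> r) \<circ> s) n) l < e"
    by blast
  then have M: "dist (((z \<circ> r) \<circ> s) M0) l < e" by blast
  have "infdist (z (r (s M0))) ?C \<le> dist (z (r (s M0))) l" by (rule infdist_le[OF l])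
  moreover have "infdist (z (r (s M0))) ?C \<ge> e" using r(2) by simp
  ultimately show False using M by simp
qed

theorem lemma3p3:
  fixes f :: "'a::euclidean_space \<Rightarrow> real" and g :: "'b::euclidean_space \<Rightarrow> real"
    and Q :: "'a \<times> 'b \<Rightarrow> ereal" and L :: "'a \<times> 'b \<Rightarrow> ereal"
    and df :: "'a \<Rightarrow> 'a" and dg :: "'b \<Rightarrow> 'b"
    and Lf Lg :: real
    and phi1 :: "'a \<Rightarrow> real" and dphi1 :: "'a \<Rightarrow> 'a"
    and phi2 :: "'b \<Rightarrow> real" and dphi2 :: "'b \<Rightarrow> 'b"
    and theta1 theta2 eta1 eta2 :: real
    and q :: "'a \<times> 'b \<Rightarrow> real" and dxq :: "'a \<times> 'b \<Rightarrow> 'a" and h :: "'a \<Rightarrow> ereal"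
    and x xh :: "nat \<Rightarrow> 'a" and y yh :: "nat \<Rightarrow> 'b"
    and xm1 :: 'a and ym1 :: 'b
    and alpha beta :: "nat \<Rightarrow> real" and amax bmax :: real
  assumes L_def: "\<And>u v. L (u, v) = ereal (f u) + Q (u, v) + ereal (g v)"
    \<comment> \<open>(A1)\<close>
    and L_bdd_below: "\<exists>c::real. \<forall>z. ereal c \<le> L z"
    and f_grad: "\<And>u. (f has_derivative (\<lambda>d. inner (df u) d)) (at u)"
    and g_grad: "\<And>v. (g has_derivative (\<lambda>d. inner (dg v) d)) (at v)"
    and df_lip: "lipschitz_on Lf UNIV df"
    and dg_lip: "lipschitz_on Lg UNIV dg"
    and Q_proper: "proper_fun Q" and Q_lsc: "lsc_fun Q"
    and phi1_grad: "\<And>u. (phi1 has_derivative (\<lambda>d. inner (dphi1 u) d)) (at u)"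
    and phi2_grad: "\<And>v. (phi2 has_derivative (\<lambda>d. inner (dphi2 v) d)) (at v)"
    and phi1_sc: "strongly_convex theta1 phi1" and phi2_sc: "strongly_convex theta2 phi2"
    and theta1_gt: "theta1 > Lf" and theta2_gt: "theta2 > Lg"
    and dphi1_lip: "lipschitz_on eta1 UNIV dphi1"
    and dphi2_lip: "lipschitz_on eta2 UNIV dphi2"
    \<comment> \<open>(A2)\<close>
    and L_coercive: "(L \<longlongrightarrow> \<infinity>) at_infinity"
    and domQ_closed: "closed (edom Q)"
    and partial_subdiff: "\<And>u v. (u, v) \<in> edom Q \<Longrightarrow>
          lim_subdiff (\<lambda>s. Q (s, v)) u \<times> lim_subdiff (\<lambda>t. Q (u, t)) v \<subseteq> lim_subdiff Q (u, v)"
    and Q_split: "\<And>u v. Q (u, v) = ereal (q (u, v)) + h u"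
    and h_real_ext: "\<And>u. h u \<noteq> -\<infinity>"
    and h_cont: "continuous_on (edom h) h"
    and q_cont: "continuous_on (edom Q) q"
    and q_grad: "\<And>u v. ((\<lambda>s. q (s, v)) has_derivative (\<lambda>d. inner (dxq (u, v)) d)) (at u)"
    and q_grad_cont: "\<And>v. continuous_on UNIV (\<lambda>s. dxq (s, v))"
    and q_grad_lip: "\<And>D1 D2. bounded D1 \<Longrightarrow> bounded D2 \<Longrightarrow> D1 \<times> D2 \<subseteq> edom Q \<Longrightarrow>
          \<exists>\<xi>>0. \<forall>xb\<in>D1. \<forall>v\<in>D2. \<forall>vb\<in>D2.
             norm (dxq (xb, v) - dxq (xb, vb)) \<le> \<xi> * norm (v - vb)"
    \<comment> \<open>algorithm parameters\<close>
    and amax_nn: "amax \<ge> 0" and bmax_nn: "bmax \<ge> 0" and ab_lt1: "amax + bmax < 1"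
    and alpha_rng: "\<And>k. 0 \<le> alpha k \<and> alpha k \<le> amax"
    and beta_rng: "\<And>k. 0 \<le> beta k \<and> beta k \<le> bmax"
    \<comment> \<open>the iteration\<close>
    and init: "xh 0 = x 0" "yh 0 = y 0"
    and step_x: "\<And>k u. Q (x (Suc k), yh k) + ereal (inner (df (xh k)) (x (Suc k)))
                          + ereal (bregman phi1 dphi1 (x (Suc k)) (xh k))
                        \<le> Q (u, yh k) + ereal (inner (df (xh k)) u) + ereal (bregman phi1 dphi1 u (xh k))"
    and step_y: "\<And>k v. Q (x (Suc k), y (Suc k)) + ereal (inner (dg (yh k)) (y (Suc k)))
                          + ereal (bregman phi2 dphi2 (y (Suc k)) (yh k))
                        \<le> Q (x (Suc k), v) + ereal (inner (dg (yh k)) v) + ereal (bregman phi2 dphi2 v (yh k))"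
    and step_hat: "\<And>k.
          let xp = (if k = 0 then xm1 else x (k - 1));
              yp = (if k = 0 then ym1 else y (k - 1));
              u = x (Suc k) + alpha k *\<^sub>R (x (Suc k) - x k) + beta k *\<^sub>R (x k - xp);
              v = y (Suc k) + alpha k *\<^sub>R (y (Suc k) - y k) + beta k *\<^sub>R (y k - yp)
          in (xh (Suc k), yh (Suc k)) =
               (if L (u, v) \<le> L (x (Suc k), y (Suc k)) then (u, v) else (x (Suc k), y (Suc k)))"
  shows "cluster_points (\<lambda>k. (x k, y k)) \<noteq> {}
       \<and> compact (cluster_points (\<lambda>k. (x k, y k)))
       \<and> (\<exists>c::real. \<forall>z\<in>cluster_points (\<lambda>k. (x k, y k)). L z = ereal c)
       \<and> cluster_points (\<lambda>k. (x k, y k)) \<subseteq> crit L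
       \<and> (\<lambda>k. infdist (x k, y k) (cluster_points (\<lambda>k. (x k, y k)))) \<longlonglongrightarrow> 0"
proof -
  let ?Z = "\<lambda>k. (x k, y k)"
  define D where "D = {u. h u < \<infinity>}"
  define hr where "hr u = real_of_ereal (h u)" for u
  define Qr where "Qr p = q p + hr (fst p)" for p
  define Lr where "Lr p = f (fst p) + Qr p + g (snd p)" for p
  have edomh: "edom h = D" by (simp add: edom_def D_def)
  have hD: "h u = ereal (hr u)" if "u \<in> D" for u
    using that h_real_ext[of u] unfolding D_def hr_def by (cases "h u") auto
  have hnD: "h u = \<infinity>" if "u \<notin> D" for u
    using that unfolding D_def by (cases "h u") auto
  have QD: "Q (u, v) = ereal (Qr (u, v))" if "u \<in> D" for u v
    using hD[OF that] Q_split[of u v] unfolding Qr_def by simp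
  have QnD: "Q (u, v) = \<infinity>" if "u \<notin> D" for u v
    using hnD[OF that] Q_split[of u v] by simp
  have LD: "L (u, v) = ereal (Lr (u, v))" if "u \<in> D" for u v
    using QD[OF that] L_def[of u v] unfolding Lr_def by simp
  have LnD: "L (u, v) = \<infinity>" if "u \<notin> D" for u v
    using QnD[OF that] L_def[of u v] by simp
  have Q_ninf: "Q p \<noteq> -\<infinity>" for p
    using Q_proper unfolding proper_fun_def by blast
  have edomQ: "(u, v) \<in> edom Q \<longleftrightarrow> u \<in> D" for u v
    using QD QnD unfolding edom_def by (cases "u \<in> D") auto
  obtain p0 where p0: "Q p0 < \<infinity>" using Q_proper unfolding proper_fun_def by blast
  have u0: "fst p0 \<in> D"
  proof (rule ccontr)
    assume "fst p0 \<notin> D"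
    then have "Q (fst p0, snd p0) = \<infinity>" by (rule QnD)
    with p0 show False by simp
  qed
  define u0 where "u0 = fst p0"
  have xD: "x (Suc k) \<in> D" for k
  proof (rule ccontr)
    assume "x (Suc k) \<notin> D"
    then have "Q (x (Suc k), yh k) = \<infinity>" by (rule QnD)
    with step_x[of k u0] show False using QD[OF u0, of "yh k"] unfolding u0_def by simp
  qed
  have hatL: "L (xh (Suc k), yh (Suc k)) \<le> L (x (Suc k), y (Suc k))" for k
    using step_hat[of k] by (auto simp: Let_def split: if_splits)
  have xhD: "xh (Suc k) \<in> D" for k
  proof (rule ccontr)
    assume "xh (Suc k) \<notin> D"
    then have "L (xh (Suc k), yh (Suc k)) = \<infinity>" by (rule LnD)
    with hatL[of k] LD[OF xD[of k], of "y (Suc k)"] show False by simp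
  qed
  have hatLr: "Lr (xh (Suc k), yh (Suc k)) \<le> Lr (x (Suc k), y (Suc k))" for k
    using hatL[of k] LD[OF xD[of k]] LD[OF xhD[of k]] by simp
  define a1 where "a1 = (theta1 - Lf) / 2"
  define a2 where "a2 = (theta2 - Lg) / 2"
  have a1: "a1 > 0" and a2: "a2 > 0" using theta1_gt theta2_gt by (auto simp: a1_def a2_def)
  have descx: "f (x (Suc (Suc k))) + Qr (x (Suc (Suc k)), yh (Suc k)) + a1 * (norm (x (Suc (Suc k)) - xh (Suc k)))\<^sup>2
        \<le> f (xh (Suc k)) + Qr (xh (Suc k), yh (Suc k))" for k
  proof -
    let ?a = "x (Suc (Suc k))" and ?b = "xh (Suc k)" and ?c = "yh (Suc k)"
    have s: "Qr (?a, ?c) + inner (df ?b) ?a + bregman phi1 dphi1 ?a ?b \<le> Qr (?b, ?c) + inner (df ?b) ?b + bregman phi1 dphi1 ?b ?b"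
      using step_x[of "Suc k" ?b] QD[OF xD[of "Suc k"], of ?c] QD[OF xhD[of k], of ?c] by simp
    have b0: "bregman phi1 dphi1 ?b ?b = 0" by (simp add: bregman_def)
    have d: "f ?a \<le> f ?b + inner (df ?b) (?a - ?b) + Lf / 2 * (norm (?a - ?b))\<^sup>2"
      by (rule descent_lemma[OF f_grad df_lip])
    have sc: "bregman phi1 dphi1 ?a ?b \<ge> theta1 / 2 * (norm (?a - ?b))\<^sup>2"
      by (rule sc_bregman[OF phi1_sc phi1_grad])
    have e: "a1 * (norm (?a - ?b))\<^sup>2 = theta1 / 2 * (norm (?a - ?b))\<^sup>2 - Lf / 2 * (norm (?a - ?b))\<^sup>2"
      by (simp add: a1_def diff_divide_distrib left_diff_distrib)
    show ?thesis using s b0 d sc e unfolding inner_diff_right by linarith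
  qed
  have descy: "g (y (Suc (Suc k))) + Qr (x (Suc (Suc k)), y (Suc (Suc k))) + a2 * (norm (y (Suc (Suc k)) - yh (Suc k)))\<^sup>2
        \<le> g (yh (Suc k)) + Qr (x (Suc (Suc k)), yh (Suc k))" for k
  proof -
    let ?a = "y (Suc (Suc k))" and ?b = "yh (Suc k)" and ?c = "x (Suc (Suc k))"
    have s: "Qr (?c, ?a) + inner (dg ?b) ?a + bregman phi2 dphi2 ?a ?b \<le> Qr (?c, ?b) + inner (dg ?b) ?b + bregman phi2 dphi2 ?b ?b"
      using step_y[of "Suc k" ?b] QD[OF xD[of "Suc k"], of ?a] QD[OF xD[of "Suc k"], of ?b] by simp
    have b0: "bregman phi2 dphi2 ?b ?b = 0" by (simp add: bregman_def)
    have d: "g ?a \<le> g ?b + inner (dg ?b) (?a - ?b) + Lg / 2 * (norm (?a - ?b))\<^sup>2"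
      by (rule descent_lemma[OF g_grad dg_lip])
    have sc: "bregman phi2 dphi2 ?a ?b \<ge> theta2 / 2 * (norm (?a - ?b))\<^sup>2"
      by (rule sc_bregman[OF phi2_sc phi2_grad])
    have e: "a2 * (norm (?a - ?b))\<^sup>2 = theta2 / 2 * (norm (?a - ?b))\<^sup>2 - Lg / 2 * (norm (?a - ?b))\<^sup>2"
      by (simp add: a2_def diff_divide_distrib left_diff_distrib)
    show ?thesis using s b0 d sc e unfolding inner_diff_right by linarith
  qed
  define w where "w k = Lr (x (Suc k), y (Suc k))" for k
  define E where "E k = norm (x (Suc (Suc k)) - xh (Suc k))" for k
  define Ey where "Ey k = norm (y (Suc (Suc k)) - yh (Suc k))" for k
  have wdec: "w (Suc k) + a1 * (E k)\<^sup>2 + a2 * (Ey k)\<^sup>2 \<le> w k" for k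
    using descx[of k] descy[of k] hatLr[of k] unfolding w_def E_def Ey_def Lr_def by simp
  have wdecseq: "decseq w"
  proof (rule decseq_SucI)
    fix k show "w (Suc k) \<le> w k" using wdec[of k] a1 a2
      by (smt (verit) mult_nonneg_nonneg zero_le_power2)
  qed
  obtain c0 where c0: "\<And>z. ereal c0 \<le> L z" using L_bdd_below by blast
  have wlb: "\<forall>k. c0 \<le> w k"
  proof
    fix k show "c0 \<le> w k" using c0[of "(x (Suc k), y (Suc k))"] LD[OF xD[of k]] unfolding w_def by simp
  qed
  obtain Lstar where wl: "w \<longlonglongrightarrow> Lstar" using decseq_convergent[OF wdecseq wlb] by blast
  have wd: "(\<lambda>k. w k - w (Suc k)) \<longlonglongrightarrow> 0"
    using tendsto_diff[OF wl LIMSEQ_Suc[OF wl]] by simp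
  have E2: "(\<lambda>k. (E k)\<^sup>2) \<longlonglongrightarrow> 0"
  proof (rule tendsto_sandwich[of "\<lambda>k. 0" _ _ "\<lambda>k. (w k - w (Suc k)) / a1"])
    show "\<forall>\<^sub>F k in sequentially. 0 \<le> (E k)\<^sup>2" by simp
    show "\<forall>\<^sub>F k in sequentially. (E k)\<^sup>2 \<le> (w k - w (Suc k)) / a1"
    proof (rule always_eventually, rule allI)
      fix k have "a1 * (E k)\<^sup>2 \<le> w k - w (Suc k)" using wdec[of k] a2
        by (smt (verit) mult_nonneg_nonneg zero_le_power2)
      then show "(E k)\<^sup>2 \<le> (w k - w (Suc k)) / a1" using a1 by (simp add: field_simps)
    qed
    show "(\<lambda>k. 0::real) \<longlonglongrightarrow> 0" by simp
    show "(\<lambda>k. (w k - w (Suc k)) / a1) \<longlonglongrightarrow> 0" using tendsto_divide_zero[OF wd] by simp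
  qed
  have Ey2: "(\<lambda>k. (Ey k)\<^sup>2) \<longlonglongrightarrow> 0"
  proof (rule tendsto_sandwich[of "\<lambda>k. 0" _ _ "\<lambda>k. (w k - w (Suc k)) / a2"])
    show "\<forall>\<^sub>F k in sequentially. 0 \<le> (Ey k)\<^sup>2" by simp
    show "\<forall>\<^sub>F k in sequentially. (Ey k)\<^sup>2 \<le> (w k - w (Suc k)) / a2"
    proof (rule always_eventually, rule allI)
      fix k have "a2 * (Ey k)\<^sup>2 \<le> w k - w (Suc k)" using wdec[of k] a1
        by (smt (verit) mult_nonneg_nonneg zero_le_power2)
      then show "(Ey k)\<^sup>2 \<le> (w k - w (Suc k)) / a2" using a2 by (simp add: field_simps)
    qed
    show "(\<lambda>k. 0::real) \<longlonglongrightarrow> 0" by simp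
    show "(\<lambda>k. (w k - w (Suc k)) / a2) \<longlonglongrightarrow> 0" using tendsto_divide_zero[OF wd] by simp
  qed
  have Elim: "E \<longlonglongrightarrow> 0"
  proof -
    have "(\<lambda>k. sqrt ((E k)\<^sup>2)) \<longlonglongrightarrow> sqrt 0" by (rule tendsto_real_sqrt[OF E2])
    moreover have "(\<lambda>k. sqrt ((E k)\<^sup>2)) = E" by (auto simp: fun_eq_iff E_def)
    ultimately show ?thesis by simp
  qed
  have Eylim: "Ey \<longlonglongrightarrow> 0"
  proof -
    have "(\<lambda>k. sqrt ((Ey k)\<^sup>2)) \<longlonglongrightarrow> sqrt 0" by (rule tendsto_real_sqrt[OF Ey2])
    moreover have "(\<lambda>k. sqrt ((Ey k)\<^sup>2)) = Ey" by (auto simp: fun_eq_iff Ey_def)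
    ultimately show ?thesis by simp
  qed
  have bd: "bounded (range ?Z)"
  proof -
    have "eventually (\<lambda>p. ereal (w 0) < L p) at_infinity" using L_coercive unfolding tendsto_PInfty by blast
    then obtain b where b: "\<And>p. b \<le> norm p \<Longrightarrow> ereal (w 0) < L p" unfolding eventually_at_infinity by blast
    have nb: "norm (?Z k) \<le> max b (norm (?Z 0))" for k
    proof (cases k)
      case 0 then show ?thesis by simp
    next
      case (Suc k')
      have "L (?Z k) = ereal (w k')" using LD[OF xD[of k']] Suc unfolding w_def by simp
      moreover have "w k' \<le> w 0" using decseqD[OF wdecseq, of 0 k'] by simp
      ultimately have "\<not> ereal (w 0) < L (?Z k)" by simp
      then show ?thesis using b[of "?Z k"] by force
    qed
    show ?thesis by (rule boundedI[of _ "max b (norm (?Z 0))"]) (use nb in auto)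
  qed
  have fc: "continuous_on UNIV f"
    using f_grad by (meson continuous_on_eq_continuous_within has_derivative_continuous)
  have gc: "continuous_on UNIV g"
    using g_grad by (meson continuous_on_eq_continuous_within has_derivative_continuous)
  have phi1c: "continuous_on UNIV phi1"
    using phi1_grad by (meson continuous_on_eq_continuous_within has_derivative_continuous)
  have phi2c: "continuous_on UNIV phi2"
    using phi2_grad by (meson continuous_on_eq_continuous_within has_derivative_continuous)
  have dfc: "continuous_on UNIV df" by (rule lipschitz_on_continuous_on[OF df_lip])
  have dgc: "continuous_on UNIV dg" by (rule lipschitz_on_continuous_on[OF dg_lip])
  have dphi1c: "continuous_on UNIV dphi1" by (rule lipschitz_on_continuous_on[OF dphi1_lip])
  have dphi2c: "continuous_on UNIV dphi2" by (rule lipschitz_on_continuous_on[OF dphi2_lip])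
  have Qr_lim: "(\<lambda>j. Qr (P j)) \<longlonglongrightarrow> Qr p"
    if P: "P \<longlonglongrightarrow> p" "\<And>j. fst (P j) \<in> D" "fst p \<in> D" for P :: "nat \<Rightarrow> 'a \<times> 'b" and p
  proof -
    have inQ: "P j \<in> edom Q" for j using P(2)[of j] edomQ[of "fst (P j)" "snd (P j)"] by simp
    have "p \<in> edom Q" using P(3) edomQ[of "fst p" "snd p"] by simp
    then have 1: "(\<lambda>j. q (P j)) \<longlonglongrightarrow> q p"
      using continuous_on_tendsto_compose[OF q_cont P(1)] inQ by auto
    have "(\<lambda>j. fst (P j)) \<longlonglongrightarrow> fst p" using tendsto_fst[OF P(1)] .
    then have "(\<lambda>j. h (fst (P j))) \<longlonglongrightarrow> h (fst p)"
      by (rule continuous_on_tendsto_compose[OF h_cont[unfolded edomh]]) (use P(2,3) in auto)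
    then have "(\<lambda>j. real_of_ereal (h (fst (P j)))) \<longlonglongrightarrow> hr (fst p)"
      using hD[OF P(3)] by simp
    then have 2: "(\<lambda>j. hr (fst (P j))) \<longlonglongrightarrow> hr (fst p)" unfolding hr_def .
    show ?thesis unfolding Qr_def using tendsto_add[OF 1 2] .
  qed
  have key: "L zh = ereal Lstar \<and> zh \<in> crit L" if zh: "zh \<in> cluster_points ?Z" for zh
  proof -
    obtain xs ys where zh_eq: "zh = (xs, ys)" by (cases zh)
    obtain r where r: "strict_mono r" "(?Z \<circ> r) \<longlonglongrightarrow> zh" using zh unfolding cluster_points_def by blast
    define t where "t j = r (j + 2) - 2" for j
    have rt: "r (j + 2) = Suc (Suc (t j))" for j
      using seq_suble[OF r(1), of "j+2"] unfolding t_def by simp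
    have tm: "strict_mono t"
      unfolding strict_mono_Suc_iff
    proof
      fix j have "r (j + 2) < r (Suc j + 2)" using r(1) by (simp add: strict_mono_def)
      then show "t j < t (Suc j)" using rt[of j] rt[of "Suc j"] by simp
    qed
    have "(\<lambda>j. (?Z \<circ> r) (j + 2)) \<longlonglongrightarrow> zh"
      by (rule LIMSEQ_ignore_initial_segment[OF r(2)])
    then have Zt: "(\<lambda>j. (x (Suc (Suc (t j))), y (Suc (Suc (t j))))) \<longlonglongrightarrow> (xs, ys)"
      using rt zh_eq by (simp add: o_def)
    let ?X = "\<lambda>j. x (Suc (Suc (t j)))" and ?Y = "\<lambda>j. y (Suc (Suc (t j)))"
    let ?XH = "\<lambda>j. xh (Suc (t j))" and ?YH = "\<lambda>j. yh (Suc (t j))"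
    have X: "?X \<longlonglongrightarrow> xs" using tendsto_fst[OF Zt] by simp
    have Y: "?Y \<longlonglongrightarrow> ys" using tendsto_snd[OF Zt] by simp
    have Et: "(\<lambda>j. E (t j)) \<longlonglongrightarrow> 0" using LIMSEQ_subseq_LIMSEQ[OF Elim tm] by (simp add: o_def)
    have Eyt: "(\<lambda>j. Ey (t j)) \<longlonglongrightarrow> 0" using LIMSEQ_subseq_LIMSEQ[OF Eylim tm] by (simp add: o_def)
    have XH: "?XH \<longlonglongrightarrow> xs"
    proof -
      have "(\<lambda>j. ?X j - ?XH j) \<longlonglongrightarrow> 0" using Et unfolding E_def by (simp add: tendsto_norm_zero_iff)
      from tendsto_diff[OF X this] show ?thesis by simp
    qed
    have YH: "?YH \<longlonglongrightarrow> ys"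
    proof -
      have "(\<lambda>j. ?Y j - ?YH j) \<longlonglongrightarrow> 0" using Eyt unfolding Ey_def by (simp add: tendsto_norm_zero_iff)
      from tendsto_diff[OF Y this] show ?thesis by simp
    qed
    have zhQ: "(xs, ys) \<in> edom Q"
    proof (rule Lim_in_closed_set[OF domQ_closed _ _ Zt])
      show "\<forall>\<^sub>F j in sequentially. (?X j, ?Y j) \<in> edom Q" using xD edomQ by simp
    qed simp
    have xsD: "xs \<in> D" using zhQ edomQ by simp
    have cont_seq: "(\<lambda>j. F (S j)) \<longlonglongrightarrow> F s" if "continuous_on UNIV F" "S \<longlonglongrightarrow> s"
      for F :: "'c::topological_space \<Rightarrow> 'd::topological_space" and S s
      using continuous_on_tendsto_compose[OF that] by simp
    have LrX: "(\<lambda>j. Lr (?X j, ?Y j)) \<longlonglongrightarrow> Lr (xs, ys)"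
    proof -
      have "(\<lambda>j. Qr (?X j, ?Y j)) \<longlonglongrightarrow> Qr (xs, ys)"
        by (rule Qr_lim) (use Zt xD xsD in auto)
      then show ?thesis unfolding Lr_def using cont_seq[OF fc X] cont_seq[OF gc Y]
        by (auto intro!: tendsto_add)
    qed
    have "(\<lambda>j. w (Suc (t j))) \<longlonglongrightarrow> Lstar"
      using LIMSEQ_subseq_LIMSEQ[OF LIMSEQ_Suc[OF wl] tm] by (simp add: o_def)
    then have "(\<lambda>j. Lr (?X j, ?Y j)) \<longlonglongrightarrow> Lstar" unfolding w_def by simp
    with LrX have LrEq: "Lr (xs, ys) = Lstar" by (rule LIMSEQ_unique)
    have Lzh: "L zh = ereal Lstar" using LD[OF xsD] LrEq zh_eq by simp
    have xmin: "Qr (xs, ys) + inner (df xs) xs \<le> Qr (u, ys) + inner (df xs) u + bregman phi1 dphi1 u xs"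
      if u: "u \<in> D" for u
    proof -
      have ineq: "Qr (?X j, ?YH j) + inner (df (?XH j)) (?X j) + bregman phi1 dphi1 (?X j) (?XH j)
          \<le> Qr (u, ?YH j) + inner (df (?XH j)) u + bregman phi1 dphi1 u (?XH j)" for j
        using step_x[of "Suc (t j)" u] QD[OF xD[of "Suc (t j)"], of "?YH j"] QD[OF u, of "?YH j"] by simp
      have l1: "(\<lambda>j. Qr (?X j, ?YH j)) \<longlonglongrightarrow> Qr (xs, ys)"
        by (rule Qr_lim) (use X YH xD xsD in \<open>auto intro!: tendsto_Pair\<close>)
      have l2: "(\<lambda>j. Qr (u, ?YH j)) \<longlonglongrightarrow> Qr (u, ys)"
        by (rule Qr_lim) (use YH u in \<open>auto intro!: tendsto_Pair\<close>)
      have lL: "(\<lambda>j. Qr (?X j, ?YH j) + inner (df (?XH j)) (?X j) + bregman phi1 dphi1 (?X j) (?XH j))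
           \<longlonglongrightarrow> Qr (xs, ys) + inner (df xs) xs + bregman phi1 dphi1 xs xs"
        unfolding bregman_def
        by (intro tendsto_add tendsto_diff tendsto_inner l1 X XH cont_seq[OF dfc XH]
            cont_seq[OF phi1c X] cont_seq[OF phi1c XH] cont_seq[OF dphi1c XH])
      have lR: "(\<lambda>j. Qr (u, ?YH j) + inner (df (?XH j)) u + bregman phi1 dphi1 u (?XH j))
           \<longlonglongrightarrow> Qr (u, ys) + inner (df xs) u + bregman phi1 dphi1 u xs"
        unfolding bregman_def
        by (intro tendsto_add tendsto_diff tendsto_inner l2 XH cont_seq[OF dfc XH] tendsto_const
            cont_seq[OF phi1c XH] cont_seq[OF dphi1c XH])
      have "Qr (xs, ys) + inner (df xs) xs + bregman phi1 dphi1 xs xs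
          \<le> Qr (u, ys) + inner (df xs) u + bregman phi1 dphi1 u xs"
        by (rule LIMSEQ_le[OF lL lR]) (use ineq in blast)
      then show ?thesis by (simp add: bregman_def)
    qed
    have ymin: "Qr (xs, ys) + inner (dg ys) ys \<le> Qr (xs, v) + inner (dg ys) v + bregman phi2 dphi2 v ys" for v
    proof -
      have ineq: "Qr (?X j, ?Y j) + inner (dg (?YH j)) (?Y j) + bregman phi2 dphi2 (?Y j) (?YH j)
          \<le> Qr (?X j, v) + inner (dg (?YH j)) v + bregman phi2 dphi2 v (?YH j)" for j
        using step_y[of "Suc (t j)" v] QD[OF xD[of "Suc (t j)"], of "?Y j"] QD[OF xD[of "Suc (t j)"], of v] by simp
      have l1: "(\<lambda>j. Qr (?X j, ?Y j)) \<longlonglongrightarrow> Qr (xs, ys)"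
        by (rule Qr_lim) (use X Y xD xsD in \<open>auto intro!: tendsto_Pair\<close>)
      have l2: "(\<lambda>j. Qr (?X j, v)) \<longlonglongrightarrow> Qr (xs, v)"
        by (rule Qr_lim) (use X xD xsD in \<open>auto intro!: tendsto_Pair\<close>)
      have lL: "(\<lambda>j. Qr (?X j, ?Y j) + inner (dg (?YH j)) (?Y j) + bregman phi2 dphi2 (?Y j) (?YH j))
           \<longlonglongrightarrow> Qr (xs, ys) + inner (dg ys) ys + bregman phi2 dphi2 ys ys"
        unfolding bregman_def
        by (intro tendsto_add tendsto_diff tendsto_inner l1 Y YH cont_seq[OF dgc YH]
            cont_seq[OF phi2c Y] cont_seq[OF phi2c YH] cont_seq[OF dphi2c YH])
      have lR: "(\<lambda>j. Qr (?X j, v) + inner (dg (?YH j)) v + bregman phi2 dphi2 v (?YH j))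
           \<longlonglongrightarrow> Qr (xs, v) + inner (dg ys) v + bregman phi2 dphi2 v ys"
        unfolding bregman_def
        by (intro tendsto_add tendsto_diff tendsto_inner l2 YH cont_seq[OF dgc YH] tendsto_const
            cont_seq[OF phi2c YH] cont_seq[OF dphi2c YH])
      have "Qr (xs, ys) + inner (dg ys) ys + bregman phi2 dphi2 ys ys
          \<le> Qr (xs, v) + inner (dg ys) v + bregman phi2 dphi2 v ys"
        by (rule LIMSEQ_le[OF lL lR]) (use ineq in blast)
      then show ?thesis by (simp add: bregman_def)
    qed
    have fx: "- df xs \<in> frechet_subdiff (\<lambda>s. Q (s, ys)) xs"
    proof (rule frechet_of_min[where F="\<lambda>s. Q (s, ys)" and p=xs and c="df xs", OF phi1_grad])
      show "\<bar>Q (xs, ys)\<bar> \<noteq> \<infinity>" using QD[OF xsD] by simp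
      show "Q (u, ys) \<noteq> -\<infinity>" for u by (rule Q_ninf)
      fix u assume "Q (u, ys) \<noteq> \<infinity>"
      then have u: "u \<in> D" using QnD by blast
      show "real_of_ereal (Q (xs, ys)) + inner (df xs) xs \<le> real_of_ereal (Q (u, ys)) + inner (df xs) u + bregman phi1 dphi1 u xs"
        using xmin[OF u] QD[OF xsD] QD[OF u] by simp
    qed
    have fy: "- dg ys \<in> frechet_subdiff (\<lambda>t. Q (xs, t)) ys"
    proof (rule frechet_of_min[where F="\<lambda>t. Q (xs, t)" and p=ys and c="dg ys", OF phi2_grad])
      show "\<bar>Q (xs, ys)\<bar> \<noteq> \<infinity>" using QD[OF xsD] by simp
      show "Q (xs, v) \<noteq> -\<infinity>" for v by (rule Q_ninf)
      fix v
      show "real_of_ereal (Q (xs, ys)) + inner (dg ys) ys \<le> real_of_ereal (Q (xs, v)) + inner (dg ys) v + bregman phi2 dphi2 v ys"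
        using ymin[of v] QD[OF xsD] by simp
    qed
    have pq: "(- df xs, - dg ys) \<in> lim_subdiff Q (xs, ys)"
      using partial_subdiff[OF zhQ] frechet_in_lim[OF fx] frechet_in_lim[OF fy] by blast
    have FD: "((\<lambda>p. f (fst p) + g (snd p)) has_derivative (\<lambda>d. inner (df (fst p), dg (snd p)) d)) (at p)"
      for p :: "'a \<times> 'b"
    proof -
      have 1: "((\<lambda>p. f (fst p)) has_derivative (\<lambda>d. inner (df (fst p)) (fst d))) (at p)"
        by (rule has_derivative_compose[OF has_derivative_fst[OF has_derivative_ident] f_grad])
      have 2: "((\<lambda>p. g (snd p)) has_derivative (\<lambda>d. inner (dg (snd p)) (snd d))) (at p)"
        by (rule has_derivative_compose[OF has_derivative_snd[OF has_derivative_ident] g_grad])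
      have e: "(\<lambda>d. inner (df (fst p), dg (snd p)) d) = (\<lambda>d. inner (df (fst p)) (fst d) + inner (dg (snd p)) (snd d))"
        by (auto simp: fun_eq_iff inner_prod_def)
      show ?thesis unfolding e by (rule has_derivative_add[OF 1 2])
    qed
    have dFc: "continuous_on UNIV (\<lambda>p::'a \<times> 'b. (df (fst p), dg (snd p)))"
    proof -
      have "continuous_on UNIV (\<lambda>p::'a \<times> 'b. df (fst p))"
        by (rule continuous_on_compose2[OF dfc continuous_on_fst[OF continuous_on_id]]) auto
      moreover have "continuous_on UNIV (\<lambda>p::'a \<times> 'b. dg (snd p))"
        by (rule continuous_on_compose2[OF dgc continuous_on_snd[OF continuous_on_id]]) auto
      ultimately show ?thesis by (rule continuous_on_Pair)
    qed
    have Gq: "L p = Q p + ereal (f (fst p) + g (snd p))" for p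
    proof -
      obtain u v where p: "p = (u, v)" by (cases p)
      have e: "ereal (f u + g v) = ereal (f u) + ereal (g v)" by simp
      show ?thesis unfolding p L_def e fst_conv snd_conv by (simp only: ac_simps)
    qed
    have "(- df xs, - dg ys) + (df (fst (xs, ys)), dg (snd (xs, ys))) \<in> lim_subdiff L (xs, ys)"
      by (rule lim_sum[OF FD dFc Gq _ pq]) (use QD[OF xsD] in simp)
    then have "0 \<in> lim_subdiff L zh" using zh_eq by (simp add: zero_prod_def)
    then show ?thesis using Lzh unfolding crit_def by simp
  qed
  show ?thesis
    using cluster_nonempty[OF bd] cluster_compact[OF bd] cluster_infdist[OF bd] key by blast
qed

end
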